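(* Let $G$ be a finite, simple, connected graph of order $n$ which contains a cycle. If $\beta(G)=n-g(G)+2$, then $G$ has no cut vertex (i.e., $G$ is $2$-connected).
   Context: For vertices $x,y$ of a connected graph $G$, $d(x,y)$ denotes the length of a shortest $x$–$y$ path. A set $W\subseteq V(G)$ is a resolving set for $G$ if for every two distinct vertices $u,v\in V(G)$ there exists $w\in W$ with $d(u,w)\neq d(v,w)$. The metric dimension $\beta(G)$ is the minimum cardinality of a resolving set. The girth $g(G)$ is the length of a shortest cycle of $G$. A vertex $v$ is a cut vertex if $G\setminus\{v\}$ has at least two connected components. *)

theory Defs
  imports Main
begin

definition simple_graph :: "'a set \<Rightarrow> ('a \<Rightarrow> 'a \<Rightarrow> bool) \<Rightarrow> bool" where
  "simple_graph V E \<longleftrightarrow> finite V \<and> (\<forall>x y. E x y \<longrightarrow> x \<in> V \<and> y \<in> V)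
     \<and> (\<forall>x y. E x y \<longrightarrow> E y x) \<and> (\<forall>x. \<not> E x x)"

definition walk_in :: "'a set \<Rightarrow> ('a \<Rightarrow> 'a \<Rightarrow> bool) \<Rightarrow> 'a list \<Rightarrow> bool" where
  "walk_in S E xs \<longleftrightarrow> xs \<noteq> [] \<and> set xs \<subseteq> S
     \<and> (\<forall>i. Suc i < length xs \<longrightarrow> E (xs ! i) (xs ! Suc i))"

definition reachable_in :: "'a set \<Rightarrow> ('a \<Rightarrow> 'a \<Rightarrow> bool) \<Rightarrow> 'a \<Rightarrow> 'a \<Rightarrow> bool" where
  "reachable_in S E x y \<longleftrightarrow> (\<exists>xs. walk_in S E xs \<and> hd xs = x \<and> last xs = y)"

definition connected_graph :: "'a set \<Rightarrow> ('a \<Rightarrow> 'a \<Rightarrow> bool) \<Rightarrow> bool" where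
  "connected_graph V E \<longleftrightarrow> V \<noteq> {} \<and> (\<forall>x\<in>V. \<forall>y\<in>V. reachable_in V E x y)"

definition gdist :: "'a set \<Rightarrow> ('a \<Rightarrow> 'a \<Rightarrow> bool) \<Rightarrow> 'a \<Rightarrow> 'a \<Rightarrow> nat" where
  "gdist V E x y = (LEAST n. \<exists>xs. walk_in V E xs \<and> hd xs = x \<and> last xs = y \<and> length xs = Suc n)"

definition resolving_set :: "'a set \<Rightarrow> ('a \<Rightarrow> 'a \<Rightarrow> bool) \<Rightarrow> 'a set \<Rightarrow> bool" where
  "resolving_set V E W \<longleftrightarrow> W \<subseteq> V \<and>
     (\<forall>u\<in>V. \<forall>v\<in>V. u \<noteq> v \<longrightarrow> (\<exists>w\<in>W. gdist V E u w \<noteq> gdist V E v w))"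

definition metric_dim :: "'a set \<Rightarrow> ('a \<Rightarrow> 'a \<Rightarrow> bool) \<Rightarrow> nat" where
  "metric_dim V E = (LEAST k. \<exists>W. resolving_set V E W \<and> card W = k)"

definition is_cycle :: "'a set \<Rightarrow> ('a \<Rightarrow> 'a \<Rightarrow> bool) \<Rightarrow> 'a list \<Rightarrow> bool" where
  "is_cycle V E cs \<longleftrightarrow> 3 \<le> length cs \<and> distinct cs \<and> set cs \<subseteq> V
     \<and> (\<forall>i < length cs. E (cs ! i) (cs ! ((i + 1) mod length cs)))"

definition girth :: "'a set \<Rightarrow> ('a \<Rightarrow> 'a \<Rightarrow> bool) \<Rightarrow> nat" where
  "girth V E = (LEAST k. \<exists>cs. is_cycle V E cs \<and> length cs = k)"

definition cut_vertex :: "'a set \<Rightarrow> ('a \<Rightarrow> 'a \<Rightarrow> bool) \<Rightarrow> 'a \<Rightarrow> bool" where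
  "cut_vertex V E v \<longleftrightarrow> v \<in> V \<and>
     (\<exists>x\<in>V - {v}. \<exists>y\<in>V - {v}. \<not> reachable_in (V - {v}) E x y)"

end

theory Submission
  imports Defs
begin

lemma walk_single[simp]: "walk_in S E [x] \<longleftrightarrow> x \<in> S"
  by (simp add: walk_in_def)

lemma walk_cons2: "walk_in S E (x # y # xs) \<longleftrightarrow> x \<in> S \<and> E x y \<and> walk_in S E (y # xs)"
proof
  assume h: "walk_in S E (x # y # xs)"
  have "E x y" using h unfolding walk_in_def by (metis One_nat_def length_Cons less_Suc_eq_0_disj nth_Cons_0 nth_Cons_Suc zero_less_Suc)
  moreover have "walk_in S E (y # xs)" unfolding walk_in_def
  proof (intro conjI allI impI)
    fix i assume "Suc i < length (y # xs)"
    then have "Suc (Suc i) < length (x # y # xs)" by simp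
    then show "E ((y # xs) ! i) ((y # xs) ! Suc i)" using h unfolding walk_in_def by force
  qed (use h in \<open>auto simp: walk_in_def\<close>)
  ultimately show "x \<in> S \<and> E x y \<and> walk_in S E (y # xs)" using h by (auto simp: walk_in_def)
next
  assume h: "x \<in> S \<and> E x y \<and> walk_in S E (y # xs)"
  show "walk_in S E (x # y # xs)" unfolding walk_in_def
  proof (intro conjI allI impI)
    fix i assume i: "Suc i < length (x # y # xs)"
    show "E ((x # y # xs) ! i) ((x # y # xs) ! Suc i)"
    proof (cases i)
      case 0 then show ?thesis using h by simp
    next
      case (Suc k)
      then have "Suc k < length (y # xs)" using i by simp
      then show ?thesis using h Suc unfolding walk_in_def by simp
    qed
  qed (use h in \<open>auto simp: walk_in_def\<close>)
qed

lemma walk_nonempty: "walk_in S E xs \<Longrightarrow> xs \<noteq> []"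
  by (simp add: walk_in_def)

lemma walk_set: "walk_in S E xs \<Longrightarrow> set xs \<subseteq> S"
  by (simp add: walk_in_def)

lemma walk_edge: "walk_in S E xs \<Longrightarrow> Suc i < length xs \<Longrightarrow> E (xs ! i) (xs ! Suc i)"
  by (simp add: walk_in_def)

lemma walk_append_edge:
  "walk_in S E xs \<Longrightarrow> walk_in S E ys \<Longrightarrow> E (last xs) (hd ys) \<Longrightarrow> walk_in S E (xs @ ys)"
proof (induction xs)
  case Nil then show ?case by (simp add: walk_in_def)
next
  case (Cons x xs)
  show ?case
  proof (cases xs)
    case Nil
    obtain y ys' where ys: "ys = y # ys'" using Cons.prems(2) by (cases ys) (auto simp: walk_in_def)
    then show ?thesis using Cons.prems Nil by (simp add: walk_cons2)
  next
    case (Cons y xs')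
    then have "walk_in S E xs" using Cons.prems(1) by (simp add: walk_cons2)
    moreover have "last xs = last (x # xs)" using Cons by simp
    ultimately have "walk_in S E (xs @ ys)" using Cons.IH Cons.prems by simp
    then show ?thesis using Cons.prems(1) Cons by (simp add: walk_cons2)
  qed
qed

lemma walk_append_overlap:
  assumes "walk_in S E xs" "walk_in S E ys" "last xs = hd ys"
  shows "walk_in S E (xs @ tl ys)" "hd (xs @ tl ys) = hd xs" "last (xs @ tl ys) = last ys"
    "length (xs @ tl ys) = length xs + length ys - 1"
proof -
  obtain y ys' where ys: "ys = y # ys'" using assms(2) by (cases ys) (auto simp: walk_in_def)
  have xne: "xs \<noteq> []" using assms(1) by (simp add: walk_in_def)
  show "walk_in S E (xs @ tl ys)"
  proof (cases ys')
    case Nil then show ?thesis using assms ys by simp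
  next
    case (Cons z zs)
    then show ?thesis using assms ys by (intro walk_append_edge) (auto simp: walk_cons2)
  qed
  show "hd (xs @ tl ys) = hd xs" using xne by simp
  show "last (xs @ tl ys) = last ys" using assms(3) ys by (cases ys') auto
  show "length (xs @ tl ys) = length xs + length ys - 1" using ys by simp
qed

lemma walk_rev: assumes "\<And>a b. E a b \<Longrightarrow> E b a" shows "walk_in S E xs \<Longrightarrow> walk_in S E (rev xs)"
proof (induction xs)
  case Nil then show ?case by (simp add: walk_in_def)
next
  case (Cons x xs)
  show ?case
  proof (cases xs)
    case Nil then show ?thesis using Cons by simp
  next
    case (Cons y ys)
    then have "walk_in S E xs" "E x y" "x \<in> S" using Cons.prems by (auto simp: walk_cons2)
    then have "walk_in S E (rev xs)" using Cons.IH by simp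
    moreover have "E (last (rev xs)) (hd [x])" using \<open>E x y\<close> Cons assms by simp
    ultimately show ?thesis using walk_append_edge[of S E "rev xs" "[x]"] \<open>x \<in> S\<close> by simp
  qed
qed

lemma walk_take: "walk_in S E xs \<Longrightarrow> 0 < n \<Longrightarrow> walk_in S E (take n xs)"
  unfolding walk_in_def by (auto dest: in_set_takeD)

lemma walk_drop: "walk_in S E xs \<Longrightarrow> n < length xs \<Longrightarrow> walk_in S E (drop n xs)"
  unfolding walk_in_def by (auto dest: in_set_dropD)

lemma walk_mono: "walk_in S E xs \<Longrightarrow> S \<subseteq> T \<Longrightarrow> walk_in T E xs"
  unfolding walk_in_def by auto

lemma walk_subset: "walk_in T E xs \<Longrightarrow> set xs \<subseteq> S \<Longrightarrow> walk_in S E xs"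
  unfolding walk_in_def by auto

lemma gdist_le: "walk_in V E xs \<Longrightarrow> hd xs = x \<Longrightarrow> last xs = y \<Longrightarrow> gdist V E x y \<le> length xs - 1"
  unfolding gdist_def
  apply (rule Least_le)
  apply (rule exI[of _ xs])
  by (cases xs) (auto simp: walk_in_def)


definition cdist :: "nat \<Rightarrow> nat \<Rightarrow> nat \<Rightarrow> nat" where
  "cdist g a b = min (if a \<le> b then b - a else a - b) (g - (if a \<le> b then b - a else a - b))"

lemma cdist_sym: "cdist g a b = cdist g b a"
  unfolding cdist_def by auto

lemma min3: "x \<le> y + z \<Longrightarrow> y \<le> x + z \<Longrightarrow> z \<le> x + y \<Longrightarrow> x + y + z < 2 * (g::nat) \<Longrightarrow> x < g \<Longrightarrow> y < g \<Longrightarrow> z < g \<Longrightarrow>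
   min x (g - x) \<le> min y (g - y) + min z (g - z)"
  by (cases "x \<le> g - x"; cases "y \<le> g - y"; cases "z \<le> g - z"; simp only: min_def if_True if_False; linarith)
lemma cdist_tri: assumes "a < g" "b < g" "m < g" shows "cdist g a b \<le> cdist g a m + cdist g m b"
proof -
  define x where "x = (if a \<le> b then b - a else a - b)"
  define y where "y = (if a \<le> m then m - a else a - m)"
  define z where "z = (if m \<le> b then b - m else m - b)"
  have "x \<le> y + z \<and> y \<le> x + z \<and> z \<le> x + y \<and> x + y + z < 2 * g \<and> x < g \<and> y < g \<and> z < g"
    unfolding x_def y_def z_def using assms
    by (cases "a \<le> b"; cases "a \<le> m"; cases "m \<le> b"; simp only: if_True if_False; linarith)
  then show ?thesis unfolding cdist_def x_def[symmetric] y_def[symmetric] z_def[symmetric] 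
    using min3 by blast
qed
lemma res1: "i < (g::nat) \<Longrightarrow> j < g \<Longrightarrow> min i (g-i) = min j (g-j) \<Longrightarrow> i = j \<or> i + j = g"
  by (cases "i \<le> g - i"; cases "j \<le> g - j"; simp only: min_def if_True if_False; linarith)

lemma res2: "(i::nat) \<noteq> 0 \<Longrightarrow> j \<noteq> 0 \<Longrightarrow> min (i-1) (j+1) = min (j-1) (i+1) \<Longrightarrow> i = j"
  by (cases "i - 1 \<le> j + 1"; cases "j - 1 \<le> i + 1"; simp only: min_def if_True if_False; linarith)

lemma cdist_res: assumes "3 \<le> g" "i < g" "j < g" "cdist g 0 i = cdist g 0 j" "cdist g 1 i = cdist g 1 j" shows "i = j"
proof (rule ccontr)
  assume ne: "i \<noteq> j"
  have "min i (g-i) = min j (g-j)" using assms(4) by (simp add: cdist_def)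
  then have s: "i + j = g" using res1 assms ne by blast
  then have "i \<noteq> 0" "j \<noteq> 0" using assms by auto
  then have "min (i-1) (g-(i-1)) = min (j-1) (g-(j-1))" using assms(5) by (simp add: cdist_def)
  moreover have "g - (i - 1) = j + 1" "g - (j - 1) = i + 1" using s \<open>i \<noteq> 0\<close> \<open>j \<noteq> 0\<close> by auto
  ultimately show False using res2 \<open>i \<noteq> 0\<close> \<open>j \<noteq> 0\<close> ne by metis
qed

lemma cycle_of_walk: assumes "walk_in V E xs" "distinct xs" "3 \<le> length xs" "E (last xs) (hd xs)"
  shows "is_cycle V E xs"
  unfolding is_cycle_def
proof (intro conjI allI impI)
  show "set xs \<subseteq> V" using assms(1) by (simp add: walk_in_def)
  fix i assume i: "i < length xs"
  show "E (xs ! i) (xs ! ((i + 1) mod length xs))"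
  proof (cases "Suc i < length xs")
    case True then show ?thesis using walk_edge[OF assms(1)] by simp
  next
    case False
    then have "Suc i = length xs" using i by linarith
    then have a: "xs ! i = last xs" and b: "xs ! ((i + 1) mod length xs) = hd xs"
    proof -
      have ne: "xs \<noteq> []" using assms(3) by auto
      have "i = length xs - 1" using \<open>Suc i = length xs\<close> by simp
      then show "xs ! i = last xs" using last_conv_nth[OF ne] by simp
      show "xs ! ((i + 1) mod length xs) = hd xs" using hd_conv_nth[OF ne] \<open>Suc i = length xs\<close> by simp
    qed
    show ?thesis unfolding a b by (rule assms(4))
  qed
qed (use assms in auto)

lemma cycle_walk: assumes "is_cycle V E cs" shows "walk_in V E cs"
  unfolding walk_in_def
proof (intro conjI allI impI)
  fix i assume "Suc i < length cs"
  then show "E (cs ! i) (cs ! Suc i)" using assms unfolding is_cycle_def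
    by (metis Suc_eq_plus1 Suc_lessD mod_less)
qed (use assms in \<open>auto simp: is_cycle_def\<close>)

lemma cycle_edge: "is_cycle V E cs \<Longrightarrow> i < length cs \<Longrightarrow> E (cs ! i) (cs ! ((i + 1) mod length cs))"
  by (simp add: is_cycle_def)

lemma cycle_close: assumes "is_cycle V E cs" shows "E (last cs) (hd cs)"
proof -
  have L: "3 \<le> length cs" using assms by (simp add: is_cycle_def)
  then have "E (cs ! (length cs - 1)) (cs ! ((length cs - 1 + 1) mod length cs))"
    using cycle_edge[OF assms, of "length cs - 1"] by simp
  moreover have "length cs - 1 + 1 = length cs" using L by simp
  then have "(length cs - 1 + 1) mod length cs = 0" by simp
  moreover have ne: "cs \<noteq> []" using L by auto
  ultimately show ?thesis using last_conv_nth[OF ne] hd_conv_nth[OF ne] by simp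
qed


lemma cycle_rotate: assumes "is_cycle V E cs" shows "is_cycle V E (rotate k cs)"
  unfolding is_cycle_def
proof (intro conjI allI impI)
  fix i assume i: "i < length (rotate k cs)"
  let ?L = "length cs"
  have L: "?L > 0" using assms by (auto simp: is_cycle_def)
  have i': "i < ?L" using i by simp
  have "E (cs ! ((k + i) mod ?L)) (cs ! (((k + i) mod ?L + 1) mod ?L))"
    using cycle_edge[OF assms] L by simp
  moreover have "((k + i) mod ?L + 1) mod ?L = (k + (i + 1) mod ?L) mod ?L"
    by (simp add: mod_simps add.assoc)
  ultimately show "E (rotate k cs ! i) (rotate k cs ! ((i + 1) mod length (rotate k cs)))"
    using i' L by (simp add: nth_rotate)
qed (use assms in \<open>auto simp: is_cycle_def\<close>)

locale sg =
  fixes V :: "'a set" and E :: "'a \<Rightarrow> 'a \<Rightarrow> bool"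
  assumes simple: "simple_graph V E" and conn: "connected_graph V E"
begin

lemma fin: "finite V" using simple by (simp add: simple_graph_def)
lemma Esym: "E x y \<Longrightarrow> E y x" using simple by (simp add: simple_graph_def)
lemma EV: "E x y \<Longrightarrow> x \<in> V \<and> y \<in> V" using simple by (simp add: simple_graph_def)
lemma Eirr: "\<not> E x x" using simple by (simp add: simple_graph_def)

lemma reach_refl: "x \<in> S \<Longrightarrow> reachable_in S E x x"
  unfolding reachable_in_def by (intro exI[of _ "[x]"]) simp

lemma reach_sym: "reachable_in S E x y \<Longrightarrow> reachable_in S E y x"
  unfolding reachable_in_def
proof (elim exE conjE)
  fix xs assume "walk_in S E xs" "hd xs = x" "last xs = y"
  then show "\<exists>xs. walk_in S E xs \<and> hd xs = y \<and> last xs = x"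
    using walk_rev[of E S xs] Esym walk_nonempty by (intro exI[of _ "rev xs"]) (auto simp: hd_rev last_rev)
qed

lemma reach_trans: "reachable_in S E x y \<Longrightarrow> reachable_in S E y z \<Longrightarrow> reachable_in S E x z"
  unfolding reachable_in_def
proof (elim exE conjE)
  fix xs ys assume a: "walk_in S E xs" "hd xs = x" "last xs = y" "walk_in S E ys" "hd ys = y" "last ys = z"
  then have "last xs = hd ys" by simp
  note o = walk_append_overlap[OF a(1) a(4) this]
  show "\<exists>xs. walk_in S E xs \<and> hd xs = x \<and> last xs = z"
    using o a by (intro exI[of _ "xs @ tl ys"]) simp
qed

lemma reach_mem: "reachable_in S E x y \<Longrightarrow> x \<in> S \<and> y \<in> S"
  unfolding reachable_in_def walk_in_def by (auto intro: hd_in_set last_in_set)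

lemma walk_reach: assumes "walk_in S E ws" "a \<in> set ws" "b \<in> set ws" shows "reachable_in S E a b"
proof -
  have h: "reachable_in S E (hd ws) c" if cw: "c \<in> set ws" for c
  proof -
    obtain i where i: "i < length ws" "c = ws ! i" using cw by (auto simp: in_set_conv_nth)
    have ne: "take (Suc i) ws \<noteq> []" using i by (cases ws) auto
    have "length (take (Suc i) ws) - 1 = i" using i by simp
    then have "last (take (Suc i) ws) = c" using i last_conv_nth[OF ne] by simp
    moreover have "hd (take (Suc i) ws) = hd ws" using i by (cases ws) auto
    ultimately show ?thesis unfolding reachable_in_def using walk_take[OF assms(1)]
      by (intro exI[of _ "take (Suc i) ws"]) auto
  qed
  show ?thesis using h[OF assms(2)] h[OF assms(3)] reach_sym reach_trans by blast
qed

lemma walkrev: "walk_in S E xs \<Longrightarrow> walk_in S E (rev xs)"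
  by (rule walk_rev[of E S xs]) (auto intro: Esym)

lemma walk_exists: "x \<in> V \<Longrightarrow> y \<in> V \<Longrightarrow> \<exists>xs. walk_in V E xs \<and> hd xs = x \<and> last xs = y"
  using conn by (auto simp: connected_graph_def reachable_in_def)

lemma gdist_walk: assumes "x \<in> V" "y \<in> V"
  shows "\<exists>xs. walk_in V E xs \<and> hd xs = x \<and> last xs = y \<and> length xs = Suc (gdist V E x y)"
proof -
  obtain xs where xs: "walk_in V E xs" "hd xs = x" "last xs = y" using walk_exists assms by blast
  then have "\<exists>n. \<exists>xs. walk_in V E xs \<and> hd xs = x \<and> last xs = y \<and> length xs = Suc n"
    by (intro exI[of _ "length xs - 1"] exI[of _ xs]) (cases xs, auto simp: walk_in_def)
  then show ?thesis unfolding gdist_def by (rule LeastI_ex)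
qed

lemma gdist_sym: assumes "x \<in> V" "y \<in> V" shows "gdist V E x y = gdist V E y x"
proof -
  have *: "gdist V E b a \<le> gdist V E a b" if ab: "a \<in> V" "b \<in> V" for a b
  proof -
    obtain xs where xs: "walk_in V E xs" "hd xs = a" "last xs = b" "length xs = Suc (gdist V E a b)"
      using gdist_walk[OF ab] by blast
    have "walk_in V E (rev xs)" using walkrev xs by blast
    moreover have "hd (rev xs) = b" "last (rev xs) = a" using xs walk_nonempty
      by (auto simp: hd_rev last_rev)
    ultimately show ?thesis using gdist_le xs(4) by fastforce
  qed
  show ?thesis using *[of x y] *[of y x] assms by simp
qed

lemma gdist_tri: assumes "x \<in> V" "y \<in> V" "z \<in> V"
  shows "gdist V E x z \<le> gdist V E x y + gdist V E y z"
proof -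
  obtain xs where xs: "walk_in V E xs" "hd xs = x" "last xs = y" "length xs = Suc (gdist V E x y)"
    using gdist_walk assms by blast
  obtain ys where ys: "walk_in V E ys" "hd ys = y" "last ys = z" "length ys = Suc (gdist V E y z)"
    using gdist_walk assms by blast
  have "last xs = hd ys" using xs ys by simp
  note o = walk_append_overlap[OF xs(1) ys(1) this]
  show ?thesis using gdist_le[OF o(1)] o xs ys by simp
qed

lemma gdist_refl[simp]: "x \<in> V \<Longrightarrow> gdist V E x x = 0"
  using gdist_le[of V E "[x]" x x] by simp

lemma gdist_zero: assumes "x \<in> V" "y \<in> V" "gdist V E x y = 0" shows "x = y"
proof -
  obtain xs where xs: "walk_in V E xs" "hd xs = x" "last xs = y" "length xs = Suc (gdist V E x y)"
    using gdist_walk assms by blast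
  then obtain a where "xs = [a]" using assms(3) by (cases xs) auto
  then show ?thesis using xs by simp
qed

lemma gdist_edge: "E x y \<Longrightarrow> gdist V E x y \<le> 1"
  using gdist_le[of V E "[x,y]" x y] EV by (simp add: walk_cons2)

lemma gdist_one: assumes "x \<in> V" "y \<in> V" "gdist V E x y = 1" shows "E x y"
proof -
  obtain xs where xs: "walk_in V E xs" "hd xs = x" "last xs = y" "length xs = Suc (gdist V E x y)"
    using gdist_walk assms by blast
  then obtain a b where "xs = [a,b]" using assms(3)
    by (cases xs; cases "tl xs") auto
  then show ?thesis using xs by (simp add: walk_cons2)
qed

lemma shortest_distinct: assumes xs: "walk_in V E xs" "hd xs = x" "last xs = y" "length xs = Suc (gdist V E x y)"
  shows "distinct xs"
proof (rule ccontr)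
  assume "\<not> distinct xs"
  then obtain i j where ij: "i < j" "j < length xs" "xs ! i = xs ! j"
    by (metis distinct_conv_nth linorder_neqE_nat)
  have w1: "walk_in V E (take (Suc i) xs)" using walk_take xs by blast
  have w2: "walk_in V E (drop j xs)" using walk_drop xs ij by blast
  have "last (take (Suc i) xs) = hd (drop j xs)" using ij
    by (simp add: last_conv_nth hd_drop_conv_nth min_def take_Suc_conv_app_nth)
  note o = walk_append_overlap[OF w1 w2 this]
  have "hd (take (Suc i) xs) = x" using xs ij by (cases xs) auto
  moreover have "last (drop j xs) = y" using xs ij by simp
  ultimately have "gdist V E x y \<le> length (take (Suc i) xs @ tl (drop j xs)) - 1"
    using gdist_le[OF o(1)] o by simp
  moreover have "length (take (Suc i) xs @ tl (drop j xs)) = Suc i + (length xs - j) - 1"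
    using o(4) ij by simp
  ultimately show False using ij xs(4) by simp
qed


lemma sep: assumes v: "v \<in> V" and uz: "reachable_in (V - {v}) E u z" and w: "w \<in> V" "w \<noteq> v"
  and nr: "\<not> reachable_in (V - {v}) E u w"
  shows "gdist V E z w = gdist V E z v + gdist V E v w"
proof -
  have zV: "z \<in> V" "z \<noteq> v" using reach_mem[OF uz] by auto
  obtain P where P: "walk_in V E P" "hd P = z" "last P = w" "length P = Suc (gdist V E z w)"
    using gdist_walk[OF zV(1) w(1)] by blast
  have "v \<in> set P"
  proof (rule ccontr)
    assume "v \<notin> set P"
    then have "walk_in (V - {v}) E P" using P(1) walk_set[OF P(1)] by (intro walk_subset[OF P(1)]) auto
    then have "reachable_in (V - {v}) E z w" using P unfolding reachable_in_def by blast
    then show False using nr uz reach_trans by blast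
  qed
  then obtain t where t: "t < length P" "P ! t = v" by (auto simp: in_set_conv_nth)
  have Pne: "P \<noteq> []" using P by auto
  have w1: "walk_in V E (take (Suc t) P)" using walk_take[OF P(1)] by simp
  have "length (take (Suc t) P) - 1 = t" using t by simp
  then have "last (take (Suc t) P) = v" using t last_conv_nth[of "take (Suc t) P"] Pne by simp
  moreover have "hd (take (Suc t) P) = z" using P(2) Pne by simp
  ultimately have d1: "gdist V E z v \<le> t" using gdist_le[OF w1] t by fastforce
  have w2: "walk_in V E (drop t P)" using walk_drop[OF P(1)] t by simp
  have "hd (drop t P) = v" using t by (simp add: hd_drop_conv_nth)
  moreover have "last (drop t P) = w" using P(3) t by simp
  ultimately have d2: "gdist V E v w \<le> length P - t - 1" using gdist_le[OF w2] t by fastforce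
  have "gdist V E z w \<le> gdist V E z v + gdist V E v w" using gdist_tri zV v w by blast
  then show ?thesis using d1 d2 t P(4) by linarith
qed

lemma pick_side: assumes "\<not> reachable_in (V - {v}) E x y" "walk_in (V - {v}) E ws"
  shows "\<exists>u\<in>{x,y}. \<forall>c\<in>set ws. \<not> reachable_in (V - {v}) E u c"
proof (rule ccontr)
  assume "\<not> ?thesis"
  then obtain c1 c2 where "c1 \<in> set ws" "c2 \<in> set ws" "reachable_in (V - {v}) E x c1" "reachable_in (V - {v}) E y c2"
    by blast
  then show False using assms walk_reach[OF assms(2)] reach_sym reach_trans by metis
qed

lemma neighbor_side: assumes "u \<in> V" "u \<noteq> v" "v \<in> V"
  shows "\<exists>u'. reachable_in (V - {v}) E u u' \<and> E u' v"
proof -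
  obtain P where P: "walk_in V E P" "hd P = u" "last P = v" "length P = Suc (gdist V E u v)"
    using gdist_walk assms by blast
  define d where "d = gdist V E u v"
  have dP: "distinct P" using shortest_distinct[OF P(1-3)] P(4) by simp
  have Pne: "P \<noteq> []" using P by auto
  have d0: "d \<noteq> 0" using gdist_zero assms d_def by blast
  have Pd: "P ! d = v" using P(3,4) last_conv_nth[OF Pne] d_def by simp
  have nv: "P ! t \<noteq> v" if td: "t < d" for t
  proof
    assume "P ! t = v"
    then have "P ! t = P ! d" using Pd by simp
    then have "t = d" using dP td P(4) d_def by (simp add: nth_eq_iff_index_eq)
    then show False using td by simp
  qed
  have w: "walk_in (V - {v}) E (take d P)"
  proof (rule walk_subset[OF walk_take[OF P(1)]])
    show "0 < d" using d0 by simp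
    show "set (take d P) \<subseteq> V - {v}" using walk_set[OF P(1)] nv P(4) d_def
      by (auto simp: in_set_conv_nth dest: in_set_takeD)
  qed
  have ne: "take d P \<noteq> []" using d0 Pne by simp
  have "length (take d P) - 1 = d - 1" using P(4) d_def by simp
  then have l: "last (take d P) = P ! (d - 1)" using last_conv_nth[OF ne] d0 by simp
  have h: "hd (take d P) = u" using P(2) Pne d0 by simp
  have "Suc (d - 1) < length P" using P(4) d_def d0 by simp
  then have "E (P ! (d - 1)) (P ! Suc (d - 1))" using walk_edge[OF P(1)] by blast
  then have "E (P ! (d - 1)) v" using Pd d0 by simp
  moreover have "reachable_in (V - {v}) E u (P ! (d - 1))" unfolding reachable_in_def using w l h by blast
  ultimately show ?thesis by blast
qed

end

locale sgc = sg +
  fixes cs :: "'a list"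
  assumes cyc: "is_cycle V E cs" and minc: "\<And>cs'. is_cycle V E cs' \<Longrightarrow> length cs \<le> length cs'"
begin

lemma g3: "3 \<le> length cs" using cyc by (simp add: is_cycle_def)
lemma csV: "set cs \<subseteq> V" using cyc by (simp add: is_cycle_def)
lemma csd: "distinct cs" using cyc by (simp add: is_cycle_def)
lemma csnV: "i < length cs \<Longrightarrow> cs ! i \<in> V" using csV by auto
lemma csne: "cs \<noteq> []" using g3 by (cases cs) auto
lemma g0: "0 < length cs" using g3 by linarith
lemma g1: "1 < length cs" using g3 by linarith
lemma cs0V: "cs ! 0 \<in> V" using csnV[OF g0] .
lemma cs1V: "cs ! 1 \<in> V" using csnV[OF g1] .
lemma csw: "walk_in V E cs" using cycle_walk[OF cyc] .

lemma arc1: assumes "i \<le> j" "j < length cs"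
  shows "walk_in V E (take (Suc (j-i)) (drop i cs))" "hd (take (Suc (j-i)) (drop i cs)) = cs ! i"
    "last (take (Suc (j-i)) (drop i cs)) = cs ! j" "length (take (Suc (j-i)) (drop i cs)) = Suc (j - i)"
proof -
  show "walk_in V E (take (Suc (j-i)) (drop i cs))" using assms by (intro walk_take walk_drop csw) auto
  show "hd (take (Suc (j-i)) (drop i cs)) = cs ! i" using assms by (simp add: hd_drop_conv_nth)
  show "length (take (Suc (j-i)) (drop i cs)) = Suc (j - i)" using assms by simp
  have ne: "take (Suc (j-i)) (drop i cs) \<noteq> []" using assms by simp
  have "length (take (Suc (j-i)) (drop i cs)) - 1 = j - i" using assms by simp
  moreover have "take (Suc (j-i)) (drop i cs) ! (j - i) = cs ! j" using assms by simp
  ultimately show "last (take (Suc (j-i)) (drop i cs)) = cs ! j" 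
    by (simp add: last_conv_nth[OF ne])
qed

lemma arc2: assumes "i \<le> j" "j < length cs"
  shows "walk_in V E (drop j cs @ take (Suc i) cs)" "hd (drop j cs @ take (Suc i) cs) = cs ! j"
    "last (drop j cs @ take (Suc i) cs) = cs ! i" "length (drop j cs @ take (Suc i) cs) = length cs - j + Suc i"
proof -
  have "last (drop j cs) = last cs" using assms by simp
  moreover have "hd (take (Suc i) cs) = hd cs" using assms g3 by (cases cs) auto
  ultimately show "walk_in V E (drop j cs @ take (Suc i) cs)" using assms cycle_close[OF cyc]
    by (intro walk_append_edge walk_take walk_drop csw) auto
  show "hd (drop j cs @ take (Suc i) cs) = cs ! j" using assms by (simp add: hd_drop_conv_nth)
  show "length (drop j cs @ take (Suc i) cs) = length cs - j + Suc i" using assms by simp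
  have ne: "take (Suc i) cs \<noteq> []" using assms by auto
  have "length (take (Suc i) cs) - 1 = i" using assms by simp
  then have "last (take (Suc i) cs) = cs ! i" using assms
    by (simp add: last_conv_nth[OF ne])
  then show "last (drop j cs @ take (Suc i) cs) = cs ! i" using ne by simp
qed

lemma upper: assumes "i \<le> j" "j < length cs" shows "gdist V E (cs ! i) (cs ! j) \<le> cdist (length cs) i j"
proof -
  have "gdist V E (cs ! i) (cs ! j) \<le> j - i" using gdist_le[OF arc1(1)] arc1 assms by fastforce
  moreover have "gdist V E (cs ! j) (cs ! i) \<le> length cs - (j - i)" using gdist_le[OF arc2(1)] arc2 assms by fastforce
  moreover have "gdist V E (cs ! j) (cs ! i) = gdist V E (cs ! i) (cs ! j)" using assms csnV gdist_sym by simp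
  ultimately show ?thesis using assms by (simp add: cdist_def)
qed

lemma lower_aux: "\<forall>a b. a < length cs \<longrightarrow> b < length cs \<longrightarrow> gdist V E (cs!a) (cs!b) = n \<longrightarrow> cdist (length cs) a b \<le> n"
proof (induction n rule: less_induct)
  case (less n)
  have main: "cdist (length cs) i j \<le> n" if ij: "i \<le> j" "j < length cs" and dn: "gdist V E (cs!i) (cs!j) = n" for i j
  proof (rule ccontr)
    assume "\<not> cdist (length cs) i j \<le> n"
    moreover have cv: "cdist (length cs) i j = min (j - i) (length cs - (j - i))" using ij by (simp add: cdist_def)
    ultimately have lt: "n < j - i" "n < length cs - (j - i)" by auto
    have iV: "cs ! i \<in> V" and jV: "cs ! j \<in> V" using ij csnV by auto
    obtain P where P: "walk_in V E P" "hd P = cs ! i" "last P = cs ! j" "length P = Suc n"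
      using gdist_walk[OF iV jV] dn by blast
    have dP: "distinct P" using shortest_distinct[OF P(1-3)] P(4) dn by simp
    have n0: "n \<noteq> 0"
    proof
      assume "n = 0"
      then have "cs ! i = cs ! j" using gdist_zero[OF iV jV] dn by simp
      then have "i = j" using csd ij by (simp add: nth_eq_iff_index_eq)
      then show False using lt by simp
    qed
    have Pne: "P \<noteq> []" using P by auto
    have P0: "P ! 0 = cs ! i" using P(2) hd_conv_nth[OF Pne] by simp
    have Pn: "P ! n = cs ! j" using P(3,4) last_conv_nth[OF Pne] by simp
    have PE: "E (P ! t) (P ! Suc t)" if "t < n" for t using walk_edge[OF P(1)] P(4) that by simp
    show False
    proof (cases "\<exists>t. 0 < t \<and> t < n \<and> P ! t \<in> set cs")
      case True
      then obtain t where t: "0 < t" "t < n" "P ! t \<in> set cs" by blast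
      then obtain m where m: "m < length cs" "cs ! m = P ! t" by (auto simp: in_set_conv_nth)
      have mV: "cs ! m \<in> V" using csnV[OF m(1)] .
      have w1: "walk_in V E (take (Suc t) P)" using walk_take[OF P(1)] by simp
      have "hd (take (Suc t) P) = cs ! i" using P(2) Pne by simp
      moreover have "last (take (Suc t) P) = cs ! m"
      proof -
        have ne: "take (Suc t) P \<noteq> []" using Pne by simp
        have "length (take (Suc t) P) - 1 = t" using t P(4) by simp
        then show ?thesis using last_conv_nth[OF ne] m t P(4) by simp
      qed
      ultimately have d1: "gdist V E (cs ! i) (cs ! m) \<le> t" using gdist_le[OF w1] t P(4) by fastforce
      have w2: "walk_in V E (drop t P)" using walk_drop[OF P(1)] t P(4) by simp
      have "hd (drop t P) = cs ! m" using m t P(4) by (simp add: hd_drop_conv_nth)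
      moreover have "last (drop t P) = cs ! j" using P(3) t P(4) by simp
      ultimately have d2: "gdist V E (cs ! m) (cs ! j) \<le> n - t" using gdist_le[OF w2] t P(4) by fastforce
      have c1: "cdist (length cs) i m \<le> gdist V E (cs ! i) (cs ! m)"
        using less.IH[of "gdist V E (cs ! i) (cs ! m)"] d1 t ij m by auto
      have c2: "cdist (length cs) m j \<le> gdist V E (cs ! m) (cs ! j)"
        using less.IH[of "gdist V E (cs ! m) (cs ! j)"] d2 t ij m by auto
      have "cdist (length cs) i j \<le> cdist (length cs) i m + cdist (length cs) m j"
        using cdist_tri ij m by auto
      then show False using c1 c2 d1 d2 lt cv t by linarith
    next
      case False
      define Q where "Q = take (n - 1) (drop 1 P)"
      define A where "A = take (Suc (j - i)) (drop i cs)"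
      define Z where "Z = A @ rev Q"
      have lQ: "length Q = n - 1" using P(4) n0 by (simp add: Q_def)
      have Qn: "Q ! k = P ! Suc k" if "k < n - 1" for k using that P(4) by (simp add: Q_def)
      have sQ: "set Q \<inter> set cs = {}"
      proof -
        have "x \<notin> set cs" if "x \<in> set Q" for x
        proof -
          obtain k where "k < n - 1" "x = Q ! k" using \<open>x \<in> set Q\<close> lQ by (auto simp: in_set_conv_nth)
          moreover have "Suc k < n" using \<open>k < n - 1\<close> by simp
          ultimately show ?thesis using Qn False by (metis zero_less_Suc)
        qed
        then show ?thesis by blast
      qed
      have sA: "set A \<subseteq> set cs" by (auto simp: A_def dest: in_set_takeD in_set_dropD)
      have dZ: "distinct Z" unfolding Z_def using sQ sA csd dP
        by (auto simp: A_def Q_def)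
      have a1: "walk_in V E A" "hd A = cs ! i" "last A = cs ! j" "length A = Suc (j - i)"
        using arc1[OF ij] by (simp_all add: A_def)
      have Ane: "A \<noteq> []" using a1 by auto
      have lZ: "length Z = Suc (j - i) + (n - 1)" using a1 lQ by (simp add: Z_def)
      have wZ: "walk_in V E Z"
      proof (cases "n = 1")
        case True then show ?thesis using a1 lQ by (simp add: Z_def)
      next
        case False
        have wQ: "walk_in V E Q" unfolding Q_def using False n0 P(4)
          by (intro walk_take walk_drop P(1)) auto
        have Qne: "Q \<noteq> []" using lQ False n0 by auto
        have "n - 2 < n - 1" "Suc (n - 2) = n - 1" "length Q - 1 = n - 2" using False n0 lQ by auto
        then have "hd (rev Q) = P ! (n - 1)" using Qne Qn[of "n - 2"]
          by (simp add: hd_rev last_conv_nth)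
        moreover have "E (P ! (n - 1)) (P ! n)" using PE[of "n - 1"] n0 by simp
        ultimately have "E (last A) (hd (rev Q))" using a1 Pn Esym by simp
        then show ?thesis unfolding Z_def using a1 walkrev[OF wQ] by (intro walk_append_edge) auto
      qed
      have "last Z = P ! 1"
      proof (cases "n = 1")
        case True then show ?thesis using a1 lQ Pn by (simp add: Z_def)
      next
        case False
        have Qne: "Q \<noteq> []" using lQ False n0 by auto
        then show ?thesis using Qn[of 0] False n0 by (simp add: Z_def last_rev hd_conv_nth)
      qed
      moreover have "hd Z = P ! 0" using a1 Ane P0 by (simp add: Z_def)
      ultimately have "E (last Z) (hd Z)" using PE[of 0] n0 Esym by simp
      moreover have "3 \<le> length Z" using lZ lt n0 by linarith
      ultimately have "is_cycle V E Z" using cycle_of_walk wZ dZ by blast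
      then have "length cs \<le> length Z" by (rule minc)
      then show False using lZ lt n0 by linarith
    qed
  qed
  show ?case
  proof (intro allI impI)
    fix a b assume ab: "a < length cs" "b < length cs" "gdist V E (cs ! a) (cs ! b) = n"
    show "cdist (length cs) a b \<le> n"
    proof (cases "a \<le> b")
      case True then show ?thesis using main ab by blast
    next
      case False
      have "gdist V E (cs ! b) (cs ! a) = n" using ab gdist_sym csnV by simp
      then show ?thesis using main[of b a] False ab cdist_sym by simp
    qed
  qed
qed

lemma iso: assumes "a < length cs" "b < length cs" shows "gdist V E (cs ! a) (cs ! b) = cdist (length cs) a b"
proof -
  have "gdist V E (cs ! a) (cs ! b) \<le> cdist (length cs) a b"
  proof (cases "a \<le> b")
    case True then show ?thesis using upper assms by blast
  next
    case False then show ?thesis using upper[of b a] assms gdist_sym csnV cdist_sym by simp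
  qed
  moreover have "cdist (length cs) a b \<le> gdist V E (cs ! a) (cs ! b)" using lower_aux assms by blast
  ultimately show ?thesis by simp
qed

lemma md_le: "resolving_set V E W \<Longrightarrow> metric_dim V E \<le> card W"
  unfolding metric_dim_def by (rule Least_le) blast

lemma gdist_pos: "p \<in> V \<Longrightarrow> q \<in> V \<Longrightarrow> p \<noteq> q \<Longrightarrow> gdist V E q p \<noteq> gdist V E p p"
  using gdist_zero by fastforce

lemma cardD: "card (V - set cs) = card V - length cs"
  using card_Diff_subset[of "set cs" V] csV distinct_card[OF csd] fin by simp

lemma caseA: assumes v: "v = cs ! 0" and u: "u \<in> V" "u \<noteq> v"
  and nr: "\<forall>c\<in>set cs - {v}. \<not> reachable_in (V - {v}) E u c"
  shows "metric_dim V E \<le> card V - length cs + 1"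
proof -
  have vV: "v \<in> V" using v cs0V by simp
  have "reachable_in (V - {v}) E u u" using u by (intro reach_refl) auto
  then have uc: "u \<notin> set cs" using nr u by blast
  have du: "gdist V E u (cs ! k) = gdist V E u v + cdist (length cs) 0 k" if k: "k < length cs" for k
  proof -
    have "gdist V E v (cs ! k) = cdist (length cs) 0 k" using iso[OF g0 k] v by simp
    moreover have "gdist V E u (cs ! k) = gdist V E u v + gdist V E v (cs ! k)"
    proof (cases "cs ! k = v")
      case True then show ?thesis using vV by simp
    next
      case False
      then have "\<not> reachable_in (V - {v}) E u (cs ! k)" using nr k by auto
      then show ?thesis using sep[OF vV \<open>reachable_in (V - {v}) E u u\<close>] csnV[OF k] False by blast
    qed
    ultimately show ?thesis by simp
  qed
  define W where "W = insert (cs ! 1) (V - set cs)"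
  have res: "resolving_set V E W"
    unfolding resolving_set_def
  proof (intro conjI ballI impI)
    show "W \<subseteq> V" using csnV g3 by (auto simp: W_def)
    fix p q assume pq: "p \<in> V" "q \<in> V" "p \<noteq> q"
    show "\<exists>w\<in>W. gdist V E p w \<noteq> gdist V E q w"
    proof (cases "p \<in> W")
      case True then show ?thesis using gdist_pos[OF pq] by metis
    next
      case pW: False
      show ?thesis
      proof (cases "q \<in> W")
        case True then show ?thesis using gdist_pos[of q p] pq by metis
      next
        case qW: False
        have "p \<in> set cs" "q \<in> set cs" using pW qW pq by (auto simp: W_def)
        then obtain i j where ij: "i < length cs" "p = cs ! i" "j < length cs" "q = cs ! j"
          by (auto simp: in_set_conv_nth)
        show ?thesis
        proof (rule ccontr)
          assume "\<not> ?thesis"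
          then have all: "\<forall>w\<in>W. gdist V E p w = gdist V E q w" by blast
          have "cs ! 1 \<in> W" by (simp add: W_def)
          then have "gdist V E (cs ! i) (cs ! 1) = gdist V E (cs ! j) (cs ! 1)" using all ij by simp
          then have c1: "cdist (length cs) 1 i = cdist (length cs) 1 j" using iso ij g3 cdist_sym by simp
          have "u \<in> W" using u uc by (simp add: W_def)
          then have "gdist V E (cs ! i) u = gdist V E (cs ! j) u" using all ij by simp
          then have "gdist V E u (cs ! i) = gdist V E u (cs ! j)" using gdist_sym u csnV ij by simp
          then have c0: "cdist (length cs) 0 i = cdist (length cs) 0 j" using du ij by simp
          have "i = j" using cdist_res[OF g3 ij(1) ij(3) c0 c1] .
          then show False using ij pq by simp
        qed
      qed
    qed
  qed
  have "cs ! 1 \<notin> V - set cs" using g3 by simp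
  then have "card W = card (V - set cs) + 1" using fin by (simp add: W_def)
  then show ?thesis using md_le[OF res] cardD by simp
qed

lemma cdist0: "p < length cs \<Longrightarrow> cdist (length cs) p 0 = min p (length cs - p)"
  by (simp add: cdist_def)

lemma cdist1: "1 \<le> p \<Longrightarrow> p < length cs \<Longrightarrow> cdist (length cs) p 1 = min (p - 1) (length cs - (p - 1))"
  by (simp add: cdist_def)

lemma caseB: assumes vV: "v \<in> V" and vc: "v \<notin> set cs" and u: "u \<in> V" "u \<noteq> v" and Euv: "E u v"
  and nr: "\<forall>c\<in>set cs. \<not> reachable_in (V - {v}) E u c"
  and h0: "(\<exists>c\<in>set cs. E v c) \<longrightarrow> E v (cs ! 0)"
  shows "metric_dim V E \<le> card V - length cs + 1"
proof -
  have ruu: "reachable_in (V - {v}) E u u" using u by (intro reach_refl) auto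
  then have uc: "u \<notin> set cs" using nr u by blast
  have du: "gdist V E u (cs ! k) = gdist V E u v + gdist V E v (cs ! k)" if k: "k < length cs" for k
  proof -
    have "cs ! k \<noteq> v" using vc k by auto
    moreover have "\<not> reachable_in (V - {v}) E u (cs ! k)" using nr k by auto
    ultimately show ?thesis using sep[OF vV ruu] csnV[OF k] by blast
  qed
  have duv: "gdist V E u v = 1" using gdist_edge[OF Euv] gdist_zero[OF u(1) vV] u(2) by fastforce
  define W where "W = insert (cs ! 0) (insert (cs ! 1) (V - set cs - {u}))"
  have nocol: "\<exists>w\<in>W. gdist V E u w \<noteq> gdist V E (cs ! p) w" if p: "2 \<le> p" "p < length cs" for p
  proof (rule ccontr)
    assume "\<not> ?thesis"
    then have all: "\<forall>w\<in>W. gdist V E (cs ! p) w = gdist V E u w" by auto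
    have pV: "cs ! p \<in> V" using csnV p by simp
    have "v \<in> W" using vV vc u by (auto simp: W_def)
    then have "gdist V E (cs ! p) v = 1" using all duv by simp
    then have "E (cs ! p) v" using gdist_one pV vV by blast
    then have Evp: "E v (cs ! p)" using Esym by blast
    then have Ev0: "E v (cs ! 0)" using h0 p by auto
    have "v \<noteq> cs ! 0" using vc csne by auto
    then have dv0: "gdist V E v (cs ! 0) = 1" using gdist_edge[OF Ev0] gdist_zero[OF vV cs0V] by fastforce
    have "cs ! 0 \<in> W" by (simp add: W_def)
    then have "gdist V E (cs ! p) (cs ! 0) = 2" using all du[OF g0] duv dv0 by simp
    then have c0: "min p (length cs - p) = 2" using iso[OF p(2) g0] cdist0 p by simp
    have "cs ! 1 \<in> W" by (simp add: W_def)
    then have e1: "gdist V E (cs ! p) (cs ! 1) = 1 + gdist V E v (cs ! 1)" using all du[OF g1] duv by simp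
    have "v \<noteq> cs ! 1" using vc g1 by auto
    then have "gdist V E v (cs ! 1) \<noteq> 0" using gdist_zero[OF vV cs1V] by blast
    moreover have "gdist V E (cs ! p) (cs ! 1) = min (p - 1) (length cs - (p - 1))"
      using iso[OF p(2) g1] cdist1[of p] p by simp
    ultimately have c1: "2 \<le> min (p - 1) (length cs - (p - 1))" using e1 by linarith
    have pg: "p = length cs - 2" "5 \<le> length cs"
      using c0 c1 p unfolding min_def by (auto split: if_splits)
    define g where "g = length cs"
    have gidx: "g - 2 < g" "g - 1 < g" "0 < g" "g - 2 \<noteq> 0" "g - 1 \<noteq> 0" "g - 2 \<noteq> g - 1"
      using pg g_def by auto
    have E23: "E (cs ! (g - 2)) (cs ! (g - 1))"
    proof -
      have "(g - 2 + 1) mod g = g - 1" using pg g_def by simp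
      then show ?thesis using cycle_edge[OF cyc, of "g - 2"] gidx g_def by simp
    qed
    have E30: "E (cs ! (g - 1)) (cs ! 0)"
    proof -
      have "g - 1 + 1 = g" using pg g_def by simp
      then have "(g - 1 + 1) mod g = 0" by simp
      then show ?thesis using cycle_edge[OF cyc, of "g - 1"] gidx g_def by simp
    qed
    define Z where "Z = [cs ! 0, v, cs ! (g - 2), cs ! (g - 1)]"
    have "walk_in V E Z" unfolding Z_def using cs0V vV Ev0 Esym Evp pg E23 g_def csnV gidx
      by (simp add: walk_cons2)
    moreover have "distinct Z" unfolding Z_def using vc gidx csd g_def
      by (auto simp: nth_eq_iff_index_eq)
    moreover have "E (last Z) (hd Z)" unfolding Z_def using E30 by simp
    ultimately have "is_cycle V E Z" by (intro cycle_of_walk) (auto simp: Z_def)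
    then have "length cs \<le> 4" using minc by (fastforce simp: Z_def)
    then show False using pg by simp
  qed
  have res: "resolving_set V E W"
    unfolding resolving_set_def
  proof (intro conjI ballI impI)
    show "W \<subseteq> V" using cs0V cs1V by (auto simp: W_def)
    fix p q assume pq: "p \<in> V" "q \<in> V" "p \<noteq> q"
    show "\<exists>w\<in>W. gdist V E p w \<noteq> gdist V E q w"
    proof (cases "p \<in> W")
      case True then show ?thesis using gdist_pos[OF pq] by metis
    next
      case pW: False
      show ?thesis
      proof (cases "q \<in> W")
        case True then show ?thesis using gdist_pos[of q p] pq by metis
      next
        case qW: False
        have pc: "p = u \<or> (p \<in> set cs \<and> p \<noteq> cs ! 0 \<and> p \<noteq> cs ! 1)" using pW pq by (auto simp: W_def)
        have qc: "q = u \<or> (q \<in> set cs \<and> q \<noteq> cs ! 0 \<and> q \<noteq> cs ! 1)" using qW pq by (auto simp: W_def)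
        have big: "\<exists>k. 2 \<le> k \<and> k < length cs \<and> c = cs ! k" if cc: "c \<in> set cs" "c \<noteq> cs ! 0" "c \<noteq> cs ! 1" for c
        proof -
          obtain k where "k < length cs" "c = cs ! k" using cc(1) by (auto simp: in_set_conv_nth)
          moreover have "k \<noteq> 0" "k \<noteq> 1" using calculation cc by (metis One_nat_def)+
          ultimately show ?thesis by (intro exI[of _ k]) auto
        qed
        show ?thesis
        proof (cases "p = u")
          case True
          then obtain k where "2 \<le> k" "k < length cs" "q = cs ! k" using qc pq big by blast
          then show ?thesis using nocol True by blast
        next
          case pu: False
          show ?thesis
          proof (cases "q = u")
            case True
            then obtain k where "2 \<le> k" "k < length cs" "p = cs ! k" using pc pu big by blast
            then show ?thesis using nocol True by metis
          next
            case qu: False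
            obtain i where i: "i < length cs" "p = cs ! i" using pc pu by (auto simp: in_set_conv_nth)
            obtain j where j: "j < length cs" "q = cs ! j" using qc qu by (auto simp: in_set_conv_nth)
            show ?thesis
            proof (rule ccontr)
              assume "\<not> ?thesis"
              then have all: "\<forall>w\<in>W. gdist V E p w = gdist V E q w" by blast
              have "cs ! 1 \<in> W" "cs ! 0 \<in> W" by (simp_all add: W_def)
              then have "gdist V E (cs ! i) (cs ! 1) = gdist V E (cs ! j) (cs ! 1)"
                "gdist V E (cs ! i) (cs ! 0) = gdist V E (cs ! j) (cs ! 0)" using all i j by auto
              then have c1: "cdist (length cs) 1 i = cdist (length cs) 1 j"
                and c0: "cdist (length cs) 0 i = cdist (length cs) 0 j"
                using iso i j g0 g1 cdist_sym by simp_all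
              have "i = j" using cdist_res[OF g3 i(1) j(1) c0 c1] .
              then show False using i j pq by simp
            qed
          qed
        qed
      qed
    qed
  qed
  have uD: "u \<in> V - set cs" using u uc by simp
  have cD: "card (V - set cs - {u}) = card (V - set cs) - 1" using uD fin by simp
  have cpos: "card (V - set cs) \<ge> 1" using uD fin by (metis One_nat_def Suc_leI card_gt_0_iff empty_iff finite_Diff)
  have n01: "cs ! 0 \<noteq> cs ! 1" using nth_eq_iff_index_eq[OF csd g0 g1] by simp
  have "card W = card (V - set cs - {u}) + 2" unfolding W_def using n01 fin g1 g0 by simp
  then have "card W = card (V - set cs) + 1" using cD cpos by simp
  then show ?thesis using md_le[OF res] cardD by simp
qed

end

lemma (in sg) main: assumes ex: "\<exists>cs. is_cycle V E cs" and cv: "cut_vertex V E v"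
  shows "metric_dim V E \<le> card V - girth V E + 1"
proof -
  have "\<exists>cs. is_cycle V E cs \<and> length cs = girth V E"
    unfolding girth_def by (rule LeastI_ex) (use ex in blast)
  then obtain cs0 where c0: "is_cycle V E cs0" "length cs0 = girth V E" by blast
  have mg: "girth V E \<le> length cs'" if "is_cycle V E cs'" for cs'
    unfolding girth_def by (rule Least_le) (use that in blast)
  have sgcr: "sgc V E (rotate k cs0)" for k
    unfolding sgc_def sgc_axioms_def using sg_axioms cycle_rotate[OF c0(1)] c0(2) mg by simp
  obtain x y where xy: "v \<in> V" "x \<in> V - {v}" "y \<in> V - {v}" "\<not> reachable_in (V - {v}) E x y"
    using cv unfolding cut_vertex_def by blast
  have L0: "0 < length cs0" using c0(1) by (auto simp: is_cycle_def)
  show ?thesis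
  proof (cases "v \<in> set cs0")
    case True
    then obtain k where k: "k < length cs0" "cs0 ! k = v" by (auto simp: in_set_conv_nth)
    define cs where "cs = rotate k cs0"
    interpret C: sgc V E cs unfolding cs_def by (rule sgcr)
    have v0: "cs ! 0 = v" using k L0 by (simp add: cs_def nth_rotate)
    obtain rest where csv: "cs = v # rest" using v0 C.csne by (cases cs) auto
    have vt: "v \<notin> set rest" "tl cs = rest" using C.csd csv by auto
    have "walk_in V E (tl cs)" using walk_drop[OF C.csw, of 1] C.g1 by (simp add: drop_Suc)
    then have wt: "walk_in (V - {v}) E (tl cs)"
    proof (rule walk_subset)
      show "set (tl cs) \<subseteq> V - {v}" using walk_set[OF \<open>walk_in V E (tl cs)\<close>] vt by auto
    qed
    obtain u where u: "u \<in> {x, y}" "\<forall>c\<in>set (tl cs). \<not> reachable_in (V - {v}) E u c"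
      using pick_side[OF xy(4) wt] by blast
    have "set cs - {v} = set (tl cs)" using vt csv by auto
    then have "metric_dim V E \<le> card V - length cs + 1"
      using C.caseA[OF v0[symmetric], of u] u xy by auto
    then show ?thesis using c0 by (simp add: cs_def)
  next
    case False
    have "walk_in (V - {v}) E cs0"
    proof (rule walk_subset[OF cycle_walk[OF c0(1)]])
      show "set cs0 \<subseteq> V - {v}" using walk_set[OF cycle_walk[OF c0(1)]] False by auto
    qed
    then obtain u0 where u0: "u0 \<in> {x, y}" "\<forall>c\<in>set cs0. \<not> reachable_in (V - {v}) E u0 c"
      using pick_side[OF xy(4)] by blast
    have u0V: "u0 \<in> V" "u0 \<noteq> v" using u0 xy by auto
    obtain u where u: "reachable_in (V - {v}) E u0 u" "E u v" using neighbor_side[OF u0V xy(1)] by blast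
    have uV: "u \<in> V" "u \<noteq> v" using reach_mem[OF u(1)] by auto
    have nr: "\<forall>c\<in>set cs0. \<not> reachable_in (V - {v}) E u c" using u0 u(1) reach_trans by blast
    obtain k where k: "(\<exists>c\<in>set cs0. E v c) \<longrightarrow> E v (cs0 ! k)" "k < length cs0"
    proof (cases "\<exists>c\<in>set cs0. E v c")
      case True
      then obtain c where "c \<in> set cs0" "E v c" by blast
      then obtain k where "k < length cs0" "cs0 ! k = c" by (auto simp: in_set_conv_nth)
      then show ?thesis using that \<open>E v c\<close> by blast
    next
      case False then show ?thesis using that L0 by blast
    qed
    define cs where "cs = rotate k cs0"
    interpret C: sgc V E cs unfolding cs_def by (rule sgcr)
    have v0: "cs ! 0 = cs0 ! k" using k L0 by (simp add: cs_def nth_rotate)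
    have scs: "set cs = set cs0" by (simp add: cs_def)
    have "metric_dim V E \<le> card V - length cs + 1"
      using C.caseB[OF xy(1) _ uV u(2)] False nr k v0 scs by simp
    then show ?thesis using c0 by (simp add: cs_def)
  qed
qed

theorem proposition2p4:
  fixes V :: "'a set" and E :: "'a \<Rightarrow> 'a \<Rightarrow> bool"
  assumes "simple_graph V E"
    and "connected_graph V E"
    and "\<exists>cs. is_cycle V E cs"
    and "metric_dim V E = card V - girth V E + 2"
  shows "\<not> (\<exists>v. cut_vertex V E v)"
proof
  assume "\<exists>v. cut_vertex V E v"
  then obtain v where "cut_vertex V E v" by blast
  interpret sg V E using assms by unfold_locales
  have "metric_dim V E \<le> card V - girth V E + 1" using main assms(3) \<open>cut_vertex V E v\<close> by blast
  then show False using assms(4) by simp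
qed

end
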